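(* Let $p\ge5$ and consider the white metallic tree $\mathcal W_\pi$ under the penultimate assignment. Then (a) $\pi$ possesses the preferred son property: for every node $\nu$, exactly one son of $\nu$ has metallic code ending with $0$, and the metallic code of that son is the metallic code of $\nu$ followed by $0$; and (b) a node of $\mathcal W_\pi$ is black if and only if its metallic code ends with the digit $0$.
   Context: Fix $p\ge5$. Metallic numbers: $m_{-1}=0$, $m_0=1$, $m_{n+2}=(p-2)m_{n+1}-m_n$. With $d=p-3$, $c=p-4$, the metallic code of a positive integer $n$ is the unique word $a_k\cdots a_0$ over $\{0,\dots,p-3\}$ with $a_k\ne0$, $n=\sum a_im_i$, containing no factor $d\,c^j\,d$ ($j\ge0$). White metallic tree under an assignment $\alpha$, $\mathcal W_\alpha$: nodes are the positive integers, each black or white; root $1$ is white; nodes are processed in increasing order and node $\nu$ receives $p-2$ sons if white, $p-3$ if black, namely the smallest integers not yet used, in increasing order; the assignment specifies for each node the position of its unique black son among its sons (leftmost = position $1$), the other sons being white. The penultimate assignment $\pi$ puts the black son at the penultimate position. *)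

theory Defs
  imports Main
begin

text \<open>Metallic numbers m_0 = 1, m_1 = p-2, m_(n+2) = (p-2) m_(n+1) - m_n
  (this is the recurrence with m_(-1) = 0 shifted to nonnegative indices).\<close>
fun metal :: "nat \<Rightarrow> nat \<Rightarrow> int" where
  "metal p 0 = 1"
| "metal p (Suc 0) = int p - 2"
| "metal p (Suc (Suc n)) = (int p - 2) * metal p (Suc n) - metal p n"

text \<open>A word a_k ... a_0 is the list [a_k, ..., a_0] (most significant digit first);
  its value is sum a_i m_i.\<close>
definition mval :: "nat \<Rightarrow> nat list \<Rightarrow> int" where
  "mval p w = (\<Sum>i<length w. int (rev w ! i) * metal p i)"

definition is_mcode :: "nat \<Rightarrow> nat list \<Rightarrow> nat \<Rightarrow> bool" where
  "is_mcode p w n \<longleftrightarrow>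
     w \<noteq> [] \<and> hd w \<noteq> 0 \<and> set w \<subseteq> {0..p-3} \<and> mval p w = int n \<and>
     \<not> (\<exists>u v j. w = u @ [p-3] @ replicate j (p-4) @ [p-3] @ v)"

definition mcode :: "nat \<Rightarrow> nat \<Rightarrow> nat list" where
  "mcode p n = (THE w. is_mcode p w n)"

text \<open>Colours: True = black, False = white.  An assignment \<alpha> gives, for a node \<nu>
  having s sons, the position \<alpha> \<nu> s (leftmost = 1) of its unique black son.
  (The number of sons of \<nu> is determined by its colour, so this is the same as
  specifying a position for each node.)\<close>
type_synonym assignment = "nat \<Rightarrow> nat \<Rightarrow> nat"

definition nsons :: "nat \<Rightarrow> bool \<Rightarrow> nat" where
  "nsons p b = (if b then p - 3 else p - 2)"

definition son_colours :: "nat \<Rightarrow> assignment \<Rightarrow> nat \<Rightarrow> bool \<Rightarrow> bool list" where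
  "son_colours p \<alpha> \<nu> b = map (\<lambda>i. i = \<alpha> \<nu> (nsons p b)) [1..<nsons p b + 1]"

text \<open>colours p \<alpha> k = list of colours of the nodes 1, 2, ..., N_k already created
  after nodes 1..k have been processed (entry i is the colour of node i+1).
  Root 1 is white; processing node k+1 appends its sons (smallest unused integers,
  in increasing order).\<close>
fun colours :: "nat \<Rightarrow> assignment \<Rightarrow> nat \<Rightarrow> bool list" where
  "colours p \<alpha> 0 = [False]"
| "colours p \<alpha> (Suc k) =
     colours p \<alpha> k @ son_colours p \<alpha> (Suc k) (colours p \<alpha> k ! k)"

definition is_black :: "nat \<Rightarrow> assignment \<Rightarrow> nat \<Rightarrow> bool" where
  "is_black p \<alpha> \<nu> = colours p \<alpha> \<nu> ! (\<nu> - 1)"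

definition sons :: "nat \<Rightarrow> assignment \<Rightarrow> nat \<Rightarrow> nat set" where
  "sons p \<alpha> \<nu> = {length (colours p \<alpha> (\<nu> - 1)) + 1 .. length (colours p \<alpha> \<nu>)}"

definition penultimate :: assignment where
  "penultimate \<nu> s = s - 1"

definition preferred_son_property :: "nat \<Rightarrow> assignment \<Rightarrow> bool" where
  "preferred_son_property p \<alpha> \<longleftrightarrow>
     (\<forall>\<nu>\<ge>1. (\<exists>!s. s \<in> sons p \<alpha> \<nu> \<and> last (mcode p s) = 0) \<and>
             (\<forall>s\<in>sons p \<alpha> \<nu>. last (mcode p s) = 0 \<longrightarrow> mcode p s = mcode p \<nu> @ [0]))"

end

theory Submission imports Defs begin

definition mm :: "nat \<Rightarrow> nat \<Rightarrow> int" where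
  "mm p k = (if k = 0 then 0 else metal p (k - 1))"

lemma metal_Suc: "metal p (Suc k) = (int p - 2) * metal p k - mm p k"
  by (cases k) (auto simp: mm_def)

lemma mm_Suc[simp]: "mm p (Suc k) = metal p k" by (simp add: mm_def)
lemma mm_0[simp]: "mm p 0 = 0" by (simp add: mm_def)

lemma mval_Nil[simp]: "mval p [] = 0" by (simp add: mval_def)

lemma mval_Cons: "mval p (a # w) = int a * metal p (length w) + mval p w"
proof -
  have "mval p (a # w) = (\<Sum>i<Suc (length w). int ((rev w @ [a]) ! i) * metal p i)"
    by (simp add: mval_def)
  also have "\<dots> = (\<Sum>i<length w. int ((rev w @ [a]) ! i) * metal p i) + int a * metal p (length w)"
    by (simp add: nth_append)
  also have "(\<Sum>i<length w. int ((rev w @ [a]) ! i) * metal p i) = mval p w"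
    unfolding mval_def by (intro sum.cong) (auto simp: nth_append)
  finally show ?thesis by simp
qed

lemma mval_app_diff: "length t1 = length t2 \<Longrightarrow> mval p (z @ t1) - mval p (z @ t2) = mval p t1 - mval p t2"
  by (induction z) (auto simp: mval_Cons)

lemma mval_single[simp]: "mval p [x] = int x" by (simp add: mval_Cons)

lemma mval_snoc: "mval p (w @ [x]) = int x + mval p (w @ [0])"
  using mval_app_diff[of "[x]" "[0]" p w] by simp


lemma mval_zero_Cons[simp]: "mval p (0 # w) = mval p w" by (simp add: mval_Cons)

locale M = fixes p :: nat assumes p5: "5 \<le> p"
begin

lemma metal_basic: "mm p k \<le> metal p k \<and> 1 \<le> metal p k"
proof (induction k)
  case 0 then show ?case by simp
next
  case (Suc k)
  have "3 * metal p k \<le> (int p - 2) * metal p k"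
    using Suc p5 by (intro mult_right_mono) auto
  then show ?case using Suc metal_Suc[of p k] unfolding mm_Suc by linarith
qed

lemma metal_pos: "1 \<le> metal p k" using metal_basic by blast
lemma mm_le: "mm p k \<le> metal p k" using metal_basic by blast
lemma mm_nonneg: "0 \<le> mm p k" using metal_pos[of "k - 1"] by (simp add: mm_def)
lemma mval_nonneg: "0 \<le> mval p w" unfolding mval_def using metal_pos
  by (intro sum_nonneg) (meson mult_nonneg_nonneg of_nat_0_le_iff order_trans zero_le_one)

lemma metal_double: "2 * metal p k \<le> metal p (Suc k)"
proof -
  have "3 * metal p k \<le> (int p - 2) * metal p k"
    using metal_pos[of k] p5 by (intro mult_right_mono) auto
  then show ?thesis using mm_le[of k] by (simp add: metal_Suc)
qed

lemma metal_less_Suc: "metal p k < metal p (Suc k)"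
  using metal_double[of k] metal_pos[of k] by simp

lemma metal_strict_mono: "i < j \<Longrightarrow> metal p i < metal p j"
  by (induction j) (auto simp: less_Suc_eq intro: less_trans metal_less_Suc)

lemma metal_mono: "i \<le> j \<Longrightarrow> metal p i \<le> metal p j"
  using metal_strict_mono by (cases "i = j") (auto simp: order_le_less)





lemma metal_ge: "int k + 1 \<le> metal p k"
proof (induction k)
  case 0 then show ?case by simp
next
  case (Suc k) then show ?case using metal_less_Suc[of k] by simp
qed

definition ff :: "nat list \<Rightarrow> bool" where
  "ff w \<longleftrightarrow> \<not> (\<exists>u v j. w = u @ [p-3] @ replicate j (p-4) @ [p-3] @ v)"

definition startsD :: "nat list \<Rightarrow> bool" where
  "startsD w \<longleftrightarrow> (\<exists>j v. w = replicate j (p-4) @ (p-3) # v)"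

lemma ff_Nil[simp]: "ff []" by (simp add: ff_def)

lemma ff_Cons: "ff (a # w) \<longleftrightarrow> ff w \<and> \<not> (a = p-3 \<and> startsD w)"
proof -
  have "(\<exists>u v j. a # w = u @ [p-3] @ replicate j (p-4) @ [p-3] @ v) \<longleftrightarrow>
        (a = p-3 \<and> startsD w) \<or> (\<exists>u v j. w = u @ [p-3] @ replicate j (p-4) @ [p-3] @ v)"
  proof
    assume "\<exists>u v j. a # w = u @ [p-3] @ replicate j (p-4) @ [p-3] @ v"
    then obtain u v j where e: "a # w = u @ [p-3] @ replicate j (p-4) @ [p-3] @ v" by blast
    show "(a = p-3 \<and> startsD w) \<or> (\<exists>u v j. w = u @ [p-3] @ replicate j (p-4) @ [p-3] @ v)"
    proof (cases u)
      case Nil then show ?thesis using e by (auto simp: startsD_def)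
    next
      case (Cons x u') then show ?thesis using e by auto
    qed
  next
    assume "(a = p-3 \<and> startsD w) \<or> (\<exists>u v j. w = u @ [p-3] @ replicate j (p-4) @ [p-3] @ v)"
    then show "\<exists>u v j. a # w = u @ [p-3] @ replicate j (p-4) @ [p-3] @ v"
    proof
      assume "a = p-3 \<and> startsD w"
      then obtain j v where "a = p-3" "w = replicate j (p-4) @ (p-3) # v" by (auto simp: startsD_def)
      then have "a # w = [] @ [p-3] @ replicate j (p-4) @ [p-3] @ v" by simp
      then show ?thesis by blast
    next
      assume "\<exists>u v j. w = u @ [p-3] @ replicate j (p-4) @ [p-3] @ v"
      then obtain u v j where "w = u @ [p-3] @ replicate j (p-4) @ [p-3] @ v" by blast
      then have "a # w = (a # u) @ [p-3] @ replicate j (p-4) @ [p-3] @ v" by simp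
      then show ?thesis by blast
    qed
  qed
  then show ?thesis unfolding ff_def by blast
qed

lemma ff_suffix: "ff (z @ t) \<Longrightarrow> ff t"
  by (induction z) (auto simp: ff_Cons)

lemma ff_snoc: "ff (w @ [x]) \<Longrightarrow> ff w"
  unfolding ff_def by (metis append.assoc)

lemma ff_snoc0: "ff w \<Longrightarrow> ff (w @ [0])"
proof (rule ccontr)
  assume f: "ff w" and "\<not> ff (w @ [0])"
  then obtain u v j where e: "w @ [0] = u @ [p-3] @ replicate j (p-4) @ [p-3] @ v"
    unfolding ff_def by blast
  show False
  proof (cases v rule: rev_exhaust)
    case Nil then show ?thesis using e p5 by simp
  next
    case (snoc v' y)
    then have "w = u @ [p-3] @ replicate j (p-4) @ [p-3] @ v'" using e by simp
    then show ?thesis using f unfolding ff_def by blast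
  qed
qed

lemma bound: "set w \<subseteq> {0..p-3} \<Longrightarrow> ff w \<Longrightarrow> mval p w < metal p (length w) \<and>
   (\<not> startsD w \<longrightarrow> mval p w + mm p (length w) < metal p (length w))"
proof (induction w)
  case Nil then show ?case by simp
next
  case (Cons a w)
  define L where "L = length w"
  define m where "m = metal p L"
  have ms: "metal p (length (a # w)) = (int p - 2) * m - mm p L" "mm p (length (a#w)) = m"
    using metal_Suc[of p L] by (simp_all add: L_def m_def)
  have mv: "mval p (a # w) = int a * m + mval p w" by (simp add: mval_Cons m_def L_def)
  have a: "a \<le> p - 3" using Cons.prems by auto
  have fw: "ff w" and nd: "a = p-3 \<Longrightarrow> \<not> startsD w" using Cons.prems by (auto simp: ff_Cons)
  have IH: "mval p w < m" "\<not> startsD w \<Longrightarrow> mval p w + mm p L < m"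
    using Cons.IH Cons.prems fw by (auto simp: m_def L_def)
  have mmle: "mm p L \<le> m" "0 \<le> mm p L" using mm_le mm_nonneg by (auto simp: m_def)
  have mpos: "1 \<le> m" using metal_pos by (simp add: m_def)
  have p3: "int (p - 3) = int p - 3" "int (p-4) = int p - 4" using p5 by auto
  have i: "mval p (a # w) < metal p (length (a # w))"
  proof (cases "a = p - 3")
    case True
    then show ?thesis using IH(2)[OF nd[OF True]] unfolding ms mv by (simp add: p3 algebra_simps)
  next
    case False
    then have "int a \<le> int p - 4" using a p5 by auto
    then have "int a * m \<le> (int p - 4) * m" using mpos by (intro mult_right_mono) auto
    then show ?thesis using IH(1) mmle unfolding ms mv by (simp add: algebra_simps)
  qed
  have ii: "\<not> startsD (a # w) \<longrightarrow> mval p (a # w) + mm p (length (a#w)) < metal p (length (a # w))"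
  proof
    assume ns: "\<not> startsD (a # w)"
    then have "a \<noteq> p - 3" unfolding startsD_def by (metis append.simps(1) replicate_0)
    show "mval p (a # w) + mm p (length (a#w)) < metal p (length (a # w))"
    proof (cases "a = p - 4")
      case True
      have "\<not> startsD w"
      proof
        assume "startsD w"
        then obtain j v where "w = replicate j (p-4) @ (p-3) # v" unfolding startsD_def by blast
        then have "a # w = replicate (Suc j) (p-4) @ (p-3) # v" using True by simp
        then show False using ns unfolding startsD_def by blast
      qed
      then show ?thesis using IH(2) True unfolding ms mv by (simp add: p3 algebra_simps)
    next
      case False
      then have "int a \<le> int p - 5" using a p5 \<open>a \<noteq> p - 3\<close> by auto
      then have "int a * m \<le> (int p - 5) * m" using mpos by (intro mult_right_mono) auto
      then show ?thesis using IH(1) mmle unfolding ms mv by (simp add: algebra_simps)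
    qed
  qed
  show ?case using i ii by blast
qed

lemma startsD_lower: "w = replicate j (p-4) @ (p-3) # v \<Longrightarrow> metal p (length w) \<le> mval p w + mm p (length w)"
proof (induction j arbitrary: w)
  case 0
  define L where "L = length v"
  have "metal p (Suc L) = (int p - 2) * metal p L - mm p L" by (rule metal_Suc)
  moreover have "int (p - 3) = int p - 3" using p5 by auto
  ultimately show ?case using 0 mm_nonneg[of L] mval_nonneg[of v]
    by (simp add: mval_Cons L_def[symmetric] algebra_simps)
next
  case (Suc j)
  define w' where "w' = replicate j (p-4) @ (p-3) # v"
  have IH: "metal p (length w') \<le> mval p w' + mm p (length w')" using Suc.IH w'_def by blast
  have w: "w = (p-4) # w'" using Suc.prems w'_def by simp
  have "metal p (Suc (length w')) = (int p - 2) * metal p (length w') - mm p (length w')" by (rule metal_Suc)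
  moreover have "int (p - 4) = int p - 4" using p5 by auto
  ultimately show ?case using IH unfolding w by (simp add: mval_Cons algebra_simps)
qed

lemma startsD_lower': "startsD w \<Longrightarrow> metal p (length w) \<le> mval p w + mm p (length w)"
  unfolding startsD_def using startsD_lower by blast


definition valid :: "nat list \<Rightarrow> bool" where
  "valid w \<longleftrightarrow> set w \<subseteq> {0..p-3} \<and> ff w"

lemma is_mcode_iff: "is_mcode p w n \<longleftrightarrow> w \<noteq> [] \<and> hd w \<noteq> 0 \<and> valid w \<and> mval p w = int n"
  unfolding is_mcode_def valid_def ff_def by auto

lemma valid_bound: "valid w \<Longrightarrow> mval p w < metal p (length w)"
  using bound unfolding valid_def by blast

lemma valid_suffix: "valid (z @ t) \<Longrightarrow> valid t"
  unfolding valid_def using ff_suffix by auto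

lemma exists_word: "0 \<le> n \<Longrightarrow> n < metal p L \<Longrightarrow> \<exists>w. length w = L \<and> valid w \<and> mval p w = n"
proof (induction L arbitrary: n)
  case 0 then show ?case by (intro exI[of _ "[]"]) (simp add: valid_def)
next
  case (Suc L)
  define m where "m = metal p L"
  have mpos: "0 < m" using metal_pos[of L] by (simp add: m_def)
  have ms: "metal p (Suc L) = (int p - 2) * m - mm p L" using metal_Suc[of p L] by (simp add: m_def)
  define q where "q = n div m"
  define r where "r = n mod m"
  have nqr: "n = q * m + r" by (simp add: q_def r_def)
  have r: "0 \<le> r" "r < m" using mpos by (auto simp: r_def)
  have q0: "0 \<le> q" using Suc.prems mpos by (simp add: q_def pos_imp_zdiv_nonneg_iff)
  have qle: "q \<le> int p - 3"
  proof (rule ccontr)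
    assume "\<not> q \<le> int p - 3"
    then have "int p - 2 \<le> q" by simp
    then have "(int p - 2) * m \<le> q * m" using mpos by (intro mult_right_mono) auto
    then show False using Suc.prems nqr r ms mm_nonneg[of L] by linarith
  qed
  obtain w where w: "length w = L" "valid w" "mval p w = r" using Suc.IH[of r] r by (auto simp: m_def)
  define a where "a = nat q"
  have a: "int a = q" "a \<le> p - 3" using q0 qle p5 by (auto simp: a_def)
  have nd: "\<not> (a = p - 3 \<and> startsD w)"
  proof
    assume "a = p - 3 \<and> startsD w"
    then have "a = p - 3" "metal p L \<le> r + mm p L" using startsD_lower'[of w] w by auto
    moreover have "int (p - 3) = int p - 3" using p5 by auto
    ultimately have "(int p - 2) * m - mm p L \<le> n" using nqr a(1) by (simp add: m_def algebra_simps)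
    then show False using Suc.prems ms by linarith
  qed
  have "valid (a # w)" using w(2) a nd unfolding valid_def by (auto simp: ff_Cons)
  moreover have "mval p (a # w) = n" using nqr w a by (simp add: mval_Cons m_def)
  ultimately show ?case using w(1) by (intro exI[of _ "a # w"]) auto
qed

lemma mval_zeros: "\<forall>x\<in>set z. x = 0 \<Longrightarrow> mval p (z @ t) = mval p t"
proof (induction z)
  case (Cons x z) then show ?case by simp
qed simp

lemma code_exists: "1 \<le> n \<Longrightarrow> \<exists>w. is_mcode p w n"
proof -
  assume n: "1 \<le> n"
  have "int n < metal p n" using metal_ge[of n] by simp
  then obtain w where w: "valid w" "mval p w = int n" using exists_word[of "int n" n] by auto
  define w' where "w' = dropWhile (\<lambda>x. x = 0) w"
  have sp: "w = takeWhile (\<lambda>x. x = 0) w @ w'" by (simp add: w'_def)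
  have "\<forall>x\<in>set (takeWhile (\<lambda>x. x = 0) w). x = 0" by (meson set_takeWhileD)
  then have "mval p w = mval p w'" using mval_zeros[of "takeWhile (\<lambda>x. x = 0) w" w'] sp by simp
  then have v: "mval p w' = int n" using w(2) by simp
  have vw: "valid w'" using valid_suffix[of "takeWhile (\<lambda>x. x = 0) w" w'] sp w(1) by simp
  have ne: "w' \<noteq> []" using v n by auto
  have "hd w' \<noteq> 0" using ne hd_dropWhile[of "\<lambda>x. x = 0" w] unfolding w'_def by blast
  then show ?thesis using v vw ne by (auto simp: is_mcode_iff)
qed

lemma diff_pos: "length w = length u \<Longrightarrow> w \<noteq> u \<Longrightarrow>
  \<exists>z a b w' u'. w = z @ a # w' \<and> u = z @ b # u' \<and> a \<noteq> b \<and> length w' = length u'"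
proof (induction w arbitrary: u)
  case Nil then show ?case by simp
next
  case (Cons x w)
  then obtain y u2 where u: "u = y # u2" by (cases u) auto
  show ?case
  proof (cases "x = y")
    case False
    have "x # w = [] @ x # w \<and> u = [] @ y # u2 \<and> x \<noteq> y \<and> length w = length u2"
      using False Cons.prems u by simp
    then show ?thesis by blast
  next
    case True
    then have "w \<noteq> u2" "length w = length u2" using Cons.prems u by auto
    then obtain z a b w' u' where h: "w = z @ a # w' \<and> u2 = z @ b # u' \<and> a \<noteq> b \<and> length w' = length u'"
      using Cons.IH by blast
    then have "x # w = (x # z) @ a # w' \<and> u = (x # z) @ b # u' \<and> a \<noteq> b \<and> length w' = length u'"
      using u True by simp
    then show ?thesis by blast
  qed
qed

lemma lex_less: "valid (z @ a # w') \<Longrightarrow> a < b \<Longrightarrow> length w' = length u' \<Longrightarrow>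
  mval p (z @ a # w') < mval p (z @ b # u')"
proof -
  assume v: "valid (z @ a # w')" and ab: "a < b" and l: "length w' = length u'"
  define M where "M = metal p (length w')"
  have "valid w'" using valid_suffix[of "z @ [a]" w'] v by simp
  then have b1: "mval p w' < M" unfolding M_def by (rule valid_bound)
  have "int a + 1 \<le> int b" using ab by simp
  then have "(int a + 1) * M \<le> int b * M" using metal_pos[of "length w'"] unfolding M_def
    by (intro mult_right_mono) auto
  then have b2: "int a * M + M \<le> int b * M" by (simp add: algebra_simps)
  have "mval p (z @ a # w') - mval p (z @ b # u') = mval p (a # w') - mval p (b # u')"
    using l by (intro mval_app_diff) simp
  also have "\<dots> = int a * M + mval p w' - (int b * M + mval p u')"
    using l by (simp add: mval_Cons M_def)
  finally show ?thesis using mval_nonneg[of u'] b1 b2 by linarith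
qed

lemma code_lower: "w \<noteq> [] \<Longrightarrow> hd w \<noteq> 0 \<Longrightarrow> metal p (length w - 1) \<le> mval p w"
proof -
  assume "w \<noteq> []" "hd w \<noteq> 0"
  then obtain a w' where w: "w = a # w'" "1 \<le> a" by (cases w) auto
  have "metal p (length w') \<le> int a * metal p (length w')"
    using w(2) metal_pos[of "length w'"] by simp
  then show ?thesis using w mval_nonneg[of w'] by (simp add: mval_Cons)
qed

lemma valid_len_less: "valid w \<Longrightarrow> u \<noteq> [] \<Longrightarrow> hd u \<noteq> 0 \<Longrightarrow> length w < length u \<Longrightarrow> mval p w < mval p u"
proof -
  assume a: "valid w" "u \<noteq> []" "hd u \<noteq> 0" "length w < length u"
  have "mval p w < metal p (length w)" using a(1) by (rule valid_bound)
  also have "\<dots> \<le> metal p (length u - 1)" using a(4) by (intro metal_mono) auto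
  also have "\<dots> \<le> mval p u" using a(2,3) by (rule code_lower)
  finally show ?thesis .
qed

lemma code_unique: "is_mcode p w n \<Longrightarrow> is_mcode p u n \<Longrightarrow> w = u"
proof (rule ccontr)
  assume w: "is_mcode p w n" and u: "is_mcode p u n" and ne: "w \<noteq> u"
  have wi: "w \<noteq> []" "hd w \<noteq> 0" "valid w" "mval p w = int n" using w by (auto simp: is_mcode_iff)
  have ui: "u \<noteq> []" "hd u \<noteq> 0" "valid u" "mval p u = int n" using u by (auto simp: is_mcode_iff)
  have l: "length w = length u"
  proof (rule linorder_cases[of "length w" "length u"])
    assume "length w < length u"
    then have "mval p w < mval p u" using valid_len_less[of w u] wi ui by blast
    then show ?thesis using wi ui by simp
  next
    assume "length u < length w"
    then have "mval p u < mval p w" using valid_len_less[of u w] wi ui by blast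
    then show ?thesis using wi ui by simp
  qed
  obtain z a b w' u' where e: "w = z @ a # w'" "u = z @ b # u'" "a \<noteq> b" "length w' = length u'"
    using diff_pos[OF l ne] by blast
  show False
  proof (cases "a < b")
    case True then show ?thesis using lex_less[of z a w' b u'] e w u by (auto simp: is_mcode_iff)
  next
    case False then show ?thesis using lex_less[of z b u' a w'] e w u by (auto simp: is_mcode_iff)
  qed
qed

lemma mcode_is: "1 \<le> n \<Longrightarrow> is_mcode p (mcode p n) n"
proof -
  assume "1 \<le> n"
  then obtain w where w: "is_mcode p w n" using code_exists by blast
  then have "\<exists>!w. is_mcode p w n" using code_unique by blast
  then show ?thesis unfolding mcode_def by (rule theI')
qed

lemma mcode_eq: "is_mcode p w n \<Longrightarrow> mcode p n = w"
proof -
  assume w: "is_mcode p w n"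
  then have "metal p (length w - 1) \<le> int n" using code_lower[of w] by (simp add: is_mcode_iff)
  then have "1 \<le> n" using metal_pos[of "length w - 1"] by linarith
  then show ?thesis using mcode_is code_unique w by blast
qed


definition S :: "nat \<Rightarrow> nat" where
  "S n = (if n = 0 then 0 else nat (mval p (mcode p n @ [0])))"

definition par :: "nat \<Rightarrow> nat" where
  "par n = (if n = 0 then 0 else nat (mval p (butlast (mcode p n))))"

lemma valid_snoc0: "valid w \<Longrightarrow> valid (w @ [0])"
  unfolding valid_def using ff_snoc0 by auto

lemma valid_butlast: "valid w \<Longrightarrow> valid (butlast w)"
  unfolding valid_def using ff_snoc[of "butlast w" "last w"]
  by (cases "w = []") (auto dest: in_set_butlastD simp: append_butlast_last_id)

lemma S_code: "1 \<le> n \<Longrightarrow> is_mcode p (mcode p n @ [0]) (S n) \<and> int (S n) = mval p (mcode p n @ [0])"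
proof -
  assume n: "1 \<le> n"
  have c: "is_mcode p (mcode p n) n" using mcode_is n by blast
  have e: "int (S n) = mval p (mcode p n @ [0])" using n mval_nonneg by (simp add: S_def)
  show ?thesis using c e valid_snoc0 by (auto simp: is_mcode_iff)
qed

lemma mcode_S: "1 \<le> n \<Longrightarrow> mcode p (S n) = mcode p n @ [0]"
  using S_code mcode_eq by blast

lemma dig_S: "1 \<le> n \<Longrightarrow> last (mcode p (S n)) = 0"
  using mcode_S by simp

lemma S_pos: "1 \<le> n \<Longrightarrow> 1 \<le> S n"
proof -
  assume n: "1 \<le> n"
  have "is_mcode p (mcode p n @ [0]) (S n)" using S_code n by blast
  then have "metal p (length (mcode p n @ [0]) - 1) \<le> int (S n)"
    using code_lower[of "mcode p n @ [0]"] unfolding is_mcode_iff by simp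
  then show ?thesis using metal_pos[of "length (mcode p n @ [0]) - 1"] by linarith
qed

lemma decomp: "1 \<le> n \<Longrightarrow> n = S (par n) + last (mcode p n) \<and> (par n = 0 \<longrightarrow> last (mcode p n) \<noteq> 0)
   \<and> (par n \<noteq> 0 \<longrightarrow> mcode p n = mcode p (par n) @ [last (mcode p n)])"
proof -
  assume n: "1 \<le> n"
  define w where "w = mcode p n"
  have c: "is_mcode p w n" using mcode_is n by (simp add: w_def)
  define b where "b = butlast w"
  define x where "x = last w"
  have wbx: "w = b @ [x]" using c by (simp add: b_def x_def is_mcode_iff)
  have pn: "par n = nat (mval p b)" using n by (simp add: par_def b_def w_def)
  have mv: "int n = int x + mval p (b @ [0])" using c wbx mval_snoc[of p b x] by (simp add: is_mcode_iff)
  show ?thesis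
  proof (cases "b = []")
    case True
    then have "par n = 0" using pn by simp
    moreover have "x = n" using mv True by simp
    ultimately show ?thesis using n by (simp add: S_def x_def w_def)
  next
    case False
    have vb: "valid b" using c valid_butlast by (simp add: b_def is_mcode_iff)
    have hb: "hd b \<noteq> 0" using c False wbx by (auto simp: is_mcode_iff)
    have "metal p (length b - 1) \<le> mval p b" using code_lower False hb by blast
    then have pb: "1 \<le> par n" using pn metal_pos[of "length b - 1"] by linarith
    have "is_mcode p b (par n)" using vb hb False pn mval_nonneg[of b] by (simp add: is_mcode_iff)
    then have cb: "mcode p (par n) = b" using mcode_eq by blast
    have "int (S (par n)) = mval p (b @ [0])" using S_code[OF pb] cb by simp
    then have "n = S (par n) + x" using mv by linarith
    then show ?thesis using pb cb wbx by (simp add: x_def w_def)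
  qed
qed

lemma code_one: "mcode p 1 = [1]"
proof -
  have "valid [1]" using p5 by (auto simp: valid_def ff_Cons startsD_def)
  then have "is_mcode p [1] 1" by (simp add: is_mcode_iff)
  then show ?thesis by (rule mcode_eq)
qed

lemma S_one: "S 1 = p - 2"
proof -
  have "S 1 = nat (mval p ([1] @ [0]))" unfolding S_def code_one by simp
  then show ?thesis using p5 by (simp add: mval_Cons)
qed

lemma snoc_less: "valid (w1 @ [x]) \<Longrightarrow> w1 \<noteq> [] \<Longrightarrow> hd w1 \<noteq> 0 \<Longrightarrow> valid w2 \<Longrightarrow> w2 \<noteq> [] \<Longrightarrow> hd w2 \<noteq> 0
  \<Longrightarrow> mval p w1 < mval p w2 \<Longrightarrow> mval p (w1 @ [x]) < mval p (w2 @ [0])"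
proof -
  assume v1x: "valid (w1 @ [x])" and w1: "w1 \<noteq> []" "hd w1 \<noteq> 0" and v2: "valid w2" "w2 \<noteq> []" "hd w2 \<noteq> 0"
    and lt: "mval p w1 < mval p w2"
  have v1: "valid w1" using valid_butlast[OF v1x] by simp
  show ?thesis
  proof (rule linorder_cases[of "length w1" "length w2"])
    assume "length w1 < length w2"
    then show ?thesis using valid_len_less[OF v1x, of "w2 @ [0]"] v2 by simp
  next
    assume "length w2 < length w1"
    then have "mval p w2 < mval p w1" using valid_len_less[OF v2(1) w1] by simp
    then show ?thesis using lt by simp
  next
    assume l: "length w1 = length w2"
    have "w1 \<noteq> w2" using lt by auto
    then obtain z a b u1 u2 where e: "w1 = z @ a # u1" "w2 = z @ b # u2" "a \<noteq> b" "length u1 = length u2"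
      using diff_pos[OF l] by blast
    show ?thesis
    proof (cases "a < b")
      case True
      have "mval p (z @ a # (u1 @ [x])) < mval p (z @ b # (u2 @ [0]))"
        using lex_less[of z a "u1 @ [x]" b "u2 @ [0]"] v1x e True by simp
      then show ?thesis using e by simp
    next
      case False
      then have "b < a" using e by simp
      then have "mval p w2 < mval p w1" using lex_less[of z b u2 a u1] v2 e by simp
      then show ?thesis using lt by simp
    qed
  qed
qed

lemma S_less_Suc: "S n < S (Suc n)"
proof (cases "n = 0")
  case True then show ?thesis using S_one p5 by (simp add: S_def)
next
  case False
  then have n: "1 \<le> n" by simp
  have c1: "is_mcode p (mcode p n) n" "is_mcode p (mcode p (Suc n)) (Suc n)" using mcode_is n by auto
  have "mval p (mcode p n @ [0]) < mval p (mcode p (Suc n) @ [0])"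
    using snoc_less[of "mcode p n" 0 "mcode p (Suc n)"] c1 valid_snoc0 by (simp add: is_mcode_iff)
  then show ?thesis using S_code[OF n] S_code[of "Suc n"] by simp
qed

lemma S_strict_mono: "strict_mono S"
  using S_less_Suc by (simp add: strict_mono_Suc_iff)

lemma S_less_iff: "S a < S b \<longleftrightarrow> a < b"
  using S_strict_mono by (simp add: strict_mono_less)

lemma S_le_iff: "S a \<le> S b \<longleftrightarrow> a \<le> b"
  using S_strict_mono by (simp add: strict_mono_less_eq)

lemma S_ge: "n \<le> S n"
  using S_strict_mono by (simp add: strict_mono_imp_increasing)

lemma par_upper: "n < S (Suc (par n))"
proof (cases "n = 0")
  case True
  have "par 0 = 0" "S 0 = 0" by (simp_all add: par_def S_def)
  then show ?thesis using S_less_Suc[of 0] True by simp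
next
  case False
  then have n: "1 \<le> n" by simp
  define w where "w = mcode p n"
  have c: "is_mcode p w n" using mcode_is n by (simp add: w_def)
  have d: "n = S (par n) + last w" "par n = 0 \<longrightarrow> last w \<noteq> 0"
     "par n \<noteq> 0 \<longrightarrow> w = mcode p (par n) @ [last w]" using decomp[OF n] by (auto simp: w_def)
  show ?thesis
  proof (cases "par n = 0")
    case True
    have s: "set w \<subseteq> {0..p-3}" "w \<noteq> []" using c by (auto simp: is_mcode_iff valid_def)
    have "last w \<in> {0..p-3}" by (rule subsetD[OF s(1) last_in_set[OF s(2)]])
    then have "last w \<le> p - 3" by simp
    then show ?thesis using True d(1) S_one p5 by (simp add: S_def)
  next
    case False
    define k where "k = par n"
    define x where "x = last w"
    have k: "1 \<le> k" using False by (simp add: k_def)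
    have wk: "w = mcode p k @ [x]" using d(3) False by (simp add: k_def x_def)
    have nS: "n = S k + x" using d(1) by (simp add: k_def x_def)
    have ck: "is_mcode p (mcode p k) k" "is_mcode p (mcode p (Suc k)) (Suc k)" using mcode_is k by auto
    have vw: "valid (mcode p k @ [x])" using c wk by (simp add: is_mcode_iff)
    have "mval p (mcode p k @ [x]) < mval p (mcode p (Suc k) @ [0])"
      using snoc_less[OF vw] ck unfolding is_mcode_iff by simp
    moreover have "mval p (mcode p k @ [x]) = int n" using c wk by (simp add: is_mcode_iff)
    moreover have "int (S (Suc k)) = mval p (mcode p (Suc k) @ [0])" using S_code[of "Suc k"] by simp
    ultimately have "int n < int (S (Suc k))" by simp
    then show ?thesis by (simp add: k_def)
  qed
qed

lemma par_lower: "S (par n) \<le> n"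
proof (cases "n = 0")
  case True then show ?thesis by (simp add: par_def S_def)
next
  case False
  then have "n = S (par n) + last (mcode p n)" using decomp[of n] by simp
  then show ?thesis by linarith
qed

lemma par_unique: "S k \<le> n \<Longrightarrow> n < S (Suc k) \<Longrightarrow> par n = k"
proof -
  assume a: "S k \<le> n" "n < S (Suc k)"
  have b: "S (par n) \<le> n" "n < S (Suc (par n))" using par_lower par_upper by auto
  have "k < Suc (par n)" using a(1) b(2) S_less_iff[of k "Suc (par n)"] by linarith
  moreover have "par n < Suc k" using a(2) b(1) S_less_iff[of "par n" "Suc k"] by linarith
  ultimately show ?thesis by simp
qed

lemma dig0_iff: "1 \<le> n \<Longrightarrow> last (mcode p n) = 0 \<longleftrightarrow> n = S (par n)"
proof -
  assume n: "1 \<le> n"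
  have "n = S (par n) + last (mcode p n)" using decomp[OF n] by blast
  then show ?thesis by linarith
qed

lemma dig0_par: "1 \<le> n \<Longrightarrow> last (mcode p n) = 0 \<Longrightarrow> 1 \<le> par n"
proof -
  assume n: "1 \<le> n" and d: "last (mcode p n) = 0"
  have "par n = 0 \<longrightarrow> last (mcode p n) \<noteq> 0" using decomp[OF n] by blast
  then show ?thesis using d by (cases "par n") auto
qed

lemma par_step: "1 \<le> n \<Longrightarrow> par n = par (n - 1) + (if last (mcode p n) = 0 then 1 else 0)"
proof -
  assume n: "1 \<le> n"
  define k where "k = par n"
  have b: "S k \<le> n" "n < S (Suc k)" unfolding k_def by (rule par_lower, rule par_upper)
  show ?thesis
  proof (cases "last (mcode p n) = 0")
    case True
    have "n = S (par n)" using dig0_iff[OF n] True by blast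
    then have nk1: "n = S k" unfolding k_def .
    have "1 \<le> par n" using dig0_par[OF n True] .
    then have nk2: "1 \<le> k" unfolding k_def .
    note nk = nk1 nk2
    have "S (k - 1) < S k" using nk(2) S_less_iff[of "k - 1" k] by simp
    then have "par (n - 1) = k - 1" using nk par_unique[of "k - 1" "n - 1"] by simp
    moreover have "par n = k" by (simp add: k_def)
    ultimately show ?thesis using True nk(2) by simp
  next
    case False
    have "n \<noteq> S (par n)"
    proof
      assume h: "n = S (par n)"
      show False using False iffD2[OF dig0_iff[OF n] h] by contradiction
    qed
    then have "S k \<noteq> n" unfolding k_def by (rule not_sym)
    then have "par (n - 1) = k" using b par_unique[of k "n - 1"] by simp
    moreover have "par n = k" by (simp add: k_def)
    ultimately show ?thesis using False by simp
  qed
qed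

lemma sh_identity: "mval p (w @ [0]) = (int p - 2) * mval p w - mval p (butlast w)"
proof (induction w)
  case Nil then show ?case by simp
next
  case (Cons a w)
  define L where "L = length w"
  have bl: "mval p (butlast (a # w)) = int a * mm p L + mval p (butlast w)"
  proof (cases w)
    case Nil then show ?thesis by (simp add: L_def)
  next
    case (Cons y w')
    then show ?thesis by (simp add: L_def mval_Cons mm_def)
  qed
  have "mval p ((a # w) @ [0]) = int a * metal p (Suc L) + mval p (w @ [0])"
    by (simp add: mval_Cons L_def)
  also have "\<dots> = int a * ((int p - 2) * metal p L - mm p L) + (int p - 2) * mval p w - mval p (butlast w)"
    using Cons.IH metal_Suc[of p L] by simp
  also have "\<dots> = (int p - 2) * mval p (a # w) - mval p (butlast (a # w))"
    using bl by (simp add: mval_Cons L_def algebra_simps)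
  finally show ?case .
qed

lemma S_formula: "int (S n) = (int p - 2) * int n - int (par n)"
proof (cases "n = 0")
  case True then show ?thesis by (simp add: S_def par_def)
next
  case False
  then have n: "1 \<le> n" by simp
  have c: "is_mcode p (mcode p n) n" using mcode_is n by blast
  have "int (par n) = mval p (butlast (mcode p n))" using False mval_nonneg by (simp add: par_def)
  moreover have "int (S n) = mval p (mcode p n @ [0])" using S_code[OF n] by blast
  moreover have "mval p (mcode p n) = int n" using c by (simp add: is_mcode_iff)
  ultimately show ?thesis using sh_identity[of "mcode p n"] by simp
qed

lemma S_step: "1 \<le> n \<Longrightarrow> S n = S (n - 1) + (if last (mcode p n) = 0 then p - 3 else p - 2)"
proof -
  assume n: "1 \<le> n"
  have a: "int (S n) = (int p - 2) * int n - int (par n)" "int (S (n-1)) = (int p - 2) * int (n-1) - int (par (n-1))"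
    using S_formula by blast+
  have b: "int (par n) = int (par (n-1)) + (if last (mcode p n) = 0 then 1 else 0)"
    using par_step[OF n] by simp
  have "int (n - 1) = int n - 1" using n by simp
  then have "int (S n) = int (S (n - 1)) + (int p - 2) - (if last (mcode p n) = 0 then 1 else 0)"
    using a b by (simp add: algebra_simps)
  then show ?thesis using p5 by (cases "last (mcode p n) = 0") auto
qed

lemma T2: "S v + 2 \<le> k \<Longrightarrow> k \<le> S (Suc v) + 1 \<Longrightarrow> last (mcode p k) = 0 \<longleftrightarrow> k = S (Suc v)"
proof
  assume a: "S v + 2 \<le> k" "k \<le> S (Suc v) + 1" and d: "last (mcode p k) = 0"
  have k1: "1 \<le> k" using a by simp
  have e: "k = S (par k)" using dig0_iff[OF k1] d by blast
  have s2: "S (Suc v) + 2 \<le> S (Suc (Suc v))" using S_step[of "Suc (Suc v)"] p5 by auto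
  have "v < par k" using a(1) e S_less_iff[of v "par k"] by linarith
  moreover have "par k < Suc (Suc v)" using a(2) e s2 S_less_iff[of "par k" "Suc (Suc v)"] by linarith
  ultimately have "par k = Suc v" by simp
  then show "k = S (Suc v)" using e by simp
next
  assume "k = S (Suc v)"
  then show "last (mcode p k) = 0" using dig_S by simp
qed


lemma colours_inv: "length (colours p penultimate v) = S v + 1 \<and>
  (\<forall>i < S v + 1. colours p penultimate v ! i = (last (mcode p (Suc i)) = 0))"
proof (induction v)
  case 0
  have "mcode p (Suc 0) = [1]" using code_one by simp
  then show ?case by (simp add: S_def)
next
  case (Suc v)
  define C where "C = colours p penultimate v"
  define b where "b = C ! v"
  define N where "N = nsons p b"
  have lC: "length C = S v + 1" using Suc.IH by (simp add: C_def)
  have vlt: "v < S v + 1" using S_ge[of v] by simp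
  have bb: "b = (last (mcode p (Suc v)) = 0)" using Suc.IH vlt by (simp add: b_def C_def)
  have SN: "S (Suc v) = S v + N" using S_step[of "Suc v"] bb by (simp add: N_def nsons_def)
  have N2: "2 \<le> N" using p5 by (cases b) (auto simp: N_def nsons_def)
  have sc: "son_colours p penultimate (Suc v) b = map (\<lambda>i. i = N - 1) [1..<N+1]"
    by (simp add: son_colours_def penultimate_def N_def)
  have col: "colours p penultimate (Suc v) = C @ map (\<lambda>i. i = N - 1) [1..<N+1]"
    using sc by (simp add: C_def b_def)
  have len: "length (colours p penultimate (Suc v)) = S (Suc v) + 1" using col lC SN by simp
  have el: "colours p penultimate (Suc v) ! i = (last (mcode p (Suc i)) = 0)" if i: "i < S (Suc v) + 1" for i
  proof (cases "i < S v + 1")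
    case True
    then show ?thesis using col lC Suc.IH by (simp add: nth_append C_def)
  next
    case False
    define j where "j = i - (S v + 1)"
    have ij: "i = S v + 1 + j" "j < N" using False i SN by (auto simp: j_def)
    have "colours p penultimate (Suc v) ! i = (Suc j = N - 1)"
      using col lC ij by (simp add: nth_append)
    moreover have "last (mcode p (Suc i)) = 0 \<longleftrightarrow> Suc i = S (Suc v)"
      using T2[of v "Suc i"] ij SN by simp
    ultimately show ?thesis using ij SN N2 by auto
  qed
  show ?case using len el by simp
qed

lemma main: "preferred_son_property p penultimate \<and>
         (\<forall>\<nu>\<ge>1. is_black p penultimate \<nu> \<longleftrightarrow> last (mcode p \<nu>) = 0)"
proof
  show "\<forall>\<nu>\<ge>1. is_black p penultimate \<nu> \<longleftrightarrow> last (mcode p \<nu>) = 0"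
  proof (intro allI impI)
    fix \<nu> :: nat assume v: "1 \<le> \<nu>"
    have "\<nu> - 1 < S \<nu> + 1" using S_ge[of \<nu>] by simp
    then show "is_black p penultimate \<nu> \<longleftrightarrow> last (mcode p \<nu>) = 0"
      using colours_inv[of \<nu>] v by (simp add: is_black_def)
  qed
next
  show "preferred_son_property p penultimate"
    unfolding preferred_son_property_def
  proof (intro allI impI conjI)
    fix \<nu> :: nat assume v: "1 \<le> \<nu>"
    then obtain u where u: "\<nu> = Suc u" by (cases \<nu>) auto
    have sons: "sons p penultimate \<nu> = {S u + 2 .. S (Suc u) + 1}"
      using colours_inv[of u] colours_inv[of \<nu>] u by (simp add: sons_def)
    have step: "S u + 2 \<le> S (Suc u)" using S_step[of "Suc u"] p5 by auto
    have key: "s \<in> sons p penultimate \<nu> \<and> last (mcode p s) = 0 \<longleftrightarrow> s = S \<nu>" for s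
      using T2[of u s] step u sons by auto
    show "\<exists>!s. s \<in> sons p penultimate \<nu> \<and> last (mcode p s) = 0"
    proof (rule ex1I[of _ "S \<nu>"])
      show "S \<nu> \<in> sons p penultimate \<nu> \<and> last (mcode p (S \<nu>)) = 0" using key by blast
    next
      fix s assume "s \<in> sons p penultimate \<nu> \<and> last (mcode p s) = 0"
      then show "s = S \<nu>" using key by blast
    qed
    show "\<forall>s\<in>sons p penultimate \<nu>. last (mcode p s) = 0 \<longrightarrow> mcode p s = mcode p \<nu> @ [0]"
    proof (intro ballI impI)
      fix s assume "s \<in> sons p penultimate \<nu>" "last (mcode p s) = 0"
      then have "s = S \<nu>" using key by blast
      then show "mcode p s = mcode p \<nu> @ [0]" using mcode_S[OF v] by simp
    qed
  qed
qed

end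

theorem theorem5:
  fixes p :: nat
  assumes "p \<ge> 5"
  shows "preferred_son_property p penultimate \<and>
         (\<forall>\<nu>\<ge>1. is_black p penultimate \<nu> \<longleftrightarrow> last (mcode p \<nu>) = 0)"
proof -
  interpret M p by unfold_locales (rule assms)
  show ?thesis by (rule main)
qed

end
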